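(* Let $G$ be a graph with a distinguished vertex $v$. For each $m\ge0$ let $G_m$ be the graph obtained by attaching one endvertex of a new $m$-vertex path to $v$ by an edge (so $G_m$ has $m$ more vertices than $G$), and let $R_m(z)$ be the reciprocal polynomial of $G_m$. Then there is a monic integer polynomial $P(z)$, depending on $G$ and $v$ but not on $m$, such that for all $m\ge2$, $$(y^2-1)R_m(z)=y^{2m}P(z)-P^*(z),$$ where $P^*(z)=z^{\deg P}P(1/z)$.
   Context: Graphs are finite simple graphs; $\chi_G$ is the characteristic polynomial of the adjacency matrix of an $n$-vertex graph $G$. The reciprocal polynomial is $R_G(z)=z^n\chi_G(z+1/z)$ if $G$ is nonbipartite and $R_G(z)=z^{n/2}\chi_G(\sqrt z+1/\sqrt z)$ if $G$ is bipartite. Here $y=\sqrt z$ if the graph ($G$, equivalently each $G_m$) is bipartite, and $y=z$ otherwise. *)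

theory Defs
  imports "Jordan_Normal_Form.Char_Poly"
begin

text \<open>A finite simple graph on the vertex set {0..<n}, given by an edge relation E
  (only its restriction to {0..<n} matters).\<close>

definition simple_graph :: "nat \<Rightarrow> (nat \<Rightarrow> nat \<Rightarrow> bool) \<Rightarrow> bool" where
  "simple_graph n E \<longleftrightarrow> (\<forall>i<n. \<forall>j<n. E i j \<longrightarrow> E j i) \<and> (\<forall>i<n. \<not> E i i)"

definition adj_mat :: "nat \<Rightarrow> (nat \<Rightarrow> nat \<Rightarrow> bool) \<Rightarrow> int mat" where
  "adj_mat n E = mat n n (\<lambda>(i, j). if E i j then 1 else 0)"

definition char_poly_graph :: "nat \<Rightarrow> (nat \<Rightarrow> nat \<Rightarrow> bool) \<Rightarrow> int poly" where
  "char_poly_graph n E = char_poly (adj_mat n E)"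

definition bipartite :: "nat \<Rightarrow> (nat \<Rightarrow> nat \<Rightarrow> bool) \<Rightarrow> bool" where
  "bipartite n E \<longleftrightarrow> (\<exists>c :: nat \<Rightarrow> bool. \<forall>i<n. \<forall>j<n. E i j \<longrightarrow> c i \<noteq> c j)"

text \<open>Nonbipartite: z^n chi(z + 1/z) = sum_k c_k (z^2+1)^k z^(n-k).
  Bipartite: z^(n/2) chi(sqrt z + 1/sqrt z) = sum_k c_k (z+1)^k z^((n-k)/2), where
  only k with n-k even contribute (the other coefficients of chi vanish for bipartite graphs).\<close>
definition recip_poly :: "nat \<Rightarrow> (nat \<Rightarrow> nat \<Rightarrow> bool) \<Rightarrow> int poly" where
  "recip_poly n E =
    (let \<chi> = char_poly_graph n E in
     if bipartite n E
     then (\<Sum>k\<le>n. if even (n - k) then [:coeff \<chi> k:] * [:1, 1:] ^ k * monom 1 ((n - k) div 2) else 0)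
     else (\<Sum>k\<le>n. [:coeff \<chi> k:] * [:1, 0, 1:] ^ k * monom 1 (n - k)))"

text \<open>G_m: attach to vertex v, by an edge, one endvertex of a new path on the m vertices
  n, n+1, ..., n+m-1 (path edges {n+i, n+i+1}, plus the edge {v, n} when m > 0).\<close>
definition path_ext :: "nat \<Rightarrow> (nat \<Rightarrow> nat \<Rightarrow> bool) \<Rightarrow> nat \<Rightarrow> nat \<Rightarrow> nat \<Rightarrow> nat \<Rightarrow> bool" where
  "path_ext n E v m i j \<longleftrightarrow>
     (i < n \<and> j < n \<and> E i j) \<or>
     (0 < m \<and> ((i = v \<and> j = n) \<or> (i = n \<and> j = v))) \<or>
     (n \<le> i \<and> j = i + 1 \<and> j < n + m) \<or>
     (n \<le> j \<and> i = j + 1 \<and> i < n + m)"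

end

theory Submission
  imports Defs
begin


definition tl_mat :: "nat \<Rightarrow> 'a mat \<Rightarrow> 'a mat" where
  "tl_mat K A = mat K K (\<lambda>(i,j). A $$ (i,j))"

lemma det_last_two:
  fixes A :: "'a :: comm_ring_1 mat"
  assumes A: "A \<in> carrier_mat (Suc (Suc K)) (Suc (Suc K))"
    and r: "\<And>j. j < K \<Longrightarrow> A $$ (Suc K, j) = 0"
    and c: "\<And>i. i < K \<Longrightarrow> A $$ (i, Suc K) = 0"
  shows "det A = A $$ (Suc K, Suc K) * det (tl_mat (Suc K) A)
                 - A $$ (Suc K, K) * A $$ (K, Suc K) * det (tl_mat K A)"
proof -
  have 1: "det A = A $$ (Suc K, Suc K) * cofactor A (Suc K) (Suc K) + A $$ (Suc K, K) * cofactor A (Suc K) K"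
  proof -
    have "det A = (\<Sum>j<Suc (Suc K). A $$ (Suc K, j) * cofactor A (Suc K) j)"
      by (rule laplace_expansion_row[OF A], simp)
    also have "\<dots> = A $$ (Suc K, Suc K) * cofactor A (Suc K) (Suc K) + A $$ (Suc K, K) * cofactor A (Suc K) K"
      using r by (simp add: sum.lessThan_Suc)
    finally show ?thesis .
  qed
  have 2: "mat_delete A (Suc K) (Suc K) = tl_mat (Suc K) A"
    using A unfolding mat_delete_def tl_mat_def by (intro eq_matI) auto
  let ?B = "mat_delete A (Suc K) K"
  have B: "?B \<in> carrier_mat (Suc K) (Suc K)" using A mat_delete_carrier[OF A] by simp
  have 3: "det ?B = A $$ (K, Suc K) * det (tl_mat K A)"
  proof -
    have "det ?B = (\<Sum>i<Suc K. ?B $$ (i, K) * cofactor ?B i K)"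
      by (rule laplace_expansion_column[OF B], simp)
    also have "\<dots> = ?B $$ (K, K) * cofactor ?B K K"
      using c A by (simp add: sum.lessThan_Suc mat_delete_def)
    also have "?B $$ (K, K) = A $$ (K, Suc K)" using A by (simp add: mat_delete_def)
    also have "mat_delete ?B K K = tl_mat K A"
      using A unfolding mat_delete_def tl_mat_def by (intro eq_matI) auto
    hence "cofactor ?B K K = det (tl_mat K A)" unfolding cofactor_def by simp
    finally show ?thesis by simp
  qed
  show ?thesis using 1 2 3 unfolding cofactor_def by simp
qed


lemma cpm_index: "i < N \<Longrightarrow> j < N \<Longrightarrow> char_poly_matrix (adj_mat N E) $$ (i,j) =
   (if i = j then [:0,1:] else 0) + (if E i j then [:-1:] else 0)"
  unfolding char_poly_matrix_def adj_mat_def by auto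

lemma cpm_dim[simp]: "dim_row (char_poly_matrix (adj_mat N E)) = N" "dim_col (char_poly_matrix (adj_mat N E)) = N"
  unfolding char_poly_matrix_def adj_mat_def by auto

lemma tl_cpm: "K \<le> N \<Longrightarrow> (\<And>i j. i < K \<Longrightarrow> j < K \<Longrightarrow> E i j = E' i j) \<Longrightarrow>
  tl_mat K (char_poly_matrix (adj_mat N E)) = char_poly_matrix (adj_mat K E')"
  by (intro eq_matI) (auto simp: tl_mat_def cpm_index)

lemma char_poly_rec:
  assumes "v < n"
  shows "char_poly_graph (n + Suc (Suc k)) (path_ext n E v (Suc (Suc k))) =
    [:0,1:] * char_poly_graph (n + Suc k) (path_ext n E v (Suc k)) - char_poly_graph (n + k) (path_ext n E v k)"
proof -
  let ?A = "char_poly_matrix (adj_mat (Suc (Suc (n+k))) (path_ext n E v (Suc (Suc k))))"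
  have A: "?A \<in> carrier_mat (Suc (Suc (n+k))) (Suc (Suc (n+k)))" unfolding adj_mat_def by simp
  have "det ?A = ?A $$ (Suc (n+k), Suc (n+k)) * det (tl_mat (Suc (n+k)) ?A)
                 - ?A $$ (Suc (n+k), n+k) * ?A $$ (n+k, Suc (n+k)) * det (tl_mat (n+k) ?A)"
    by (rule det_last_two[OF A]) (use assms in \<open>auto simp: cpm_index path_ext_def\<close>)
  also have "tl_mat (Suc (n+k)) ?A = char_poly_matrix (adj_mat (Suc (n + k)) (path_ext n E v (Suc k)))"
    by (rule tl_cpm) (auto simp: path_ext_def)
  also have "tl_mat (n+k) ?A = char_poly_matrix (adj_mat (n + k) (path_ext n E v k))"
    by (rule tl_cpm) (auto simp: path_ext_def)
  also have "?A $$ (Suc (n+k), Suc (n+k)) = [:0,1:]" using assms by (simp add: cpm_index path_ext_def)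
  also have "?A $$ (Suc (n+k), n+k) = [:-1:]" using assms by (simp add: cpm_index path_ext_def)
  also have "?A $$ (n+k, Suc (n+k)) = [:-1:]" using assms by (simp add: cpm_index path_ext_def)
  finally show ?thesis unfolding char_poly_graph_def char_poly_def by simp
qed


definition revd :: "nat \<Rightarrow> 'a::comm_ring_1 poly \<Rightarrow> 'a poly" where
  "revd d p = (\<Sum>i\<le>d. monom (coeff p (d - i)) i)"

lemma coeff_revd: "coeff (revd d p) i = (if i \<le> d then coeff p (d - i) else 0)"
  unfolding revd_def by (simp add: coeff_sum coeff_monom)

definition pal :: "nat \<Rightarrow> 'a::comm_ring_1 poly \<Rightarrow> bool" where
  "pal d p \<longleftrightarrow> revd d p = p"

lemma pal_degree: "pal d p \<Longrightarrow> degree p \<le> d"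
  unfolding pal_def by (intro degree_le allI impI) (metis coeff_revd not_less)

lemma revd_reflect:
  fixes p :: "'a::comm_ring_1 poly"
  assumes "degree p \<le> d"
  shows "revd d p = monom 1 (d - degree p) * reflect_poly p"
proof (rule poly_eqI)
  fix i
  show "coeff (revd d p) i = coeff (monom 1 (d - degree p) * reflect_poly p) i"
  proof (cases "i \<le> d")
    case True
    show ?thesis
    proof (cases "d - degree p \<le> i")
      case True
      then show ?thesis using assms \<open>i \<le> d\<close> by (simp add: coeff_revd coeff_monom_mult coeff_reflect_poly)
    next
      case False
      then show ?thesis using assms \<open>i \<le> d\<close> by (simp add: coeff_revd coeff_monom_mult coeff_eq_0)
    qed
  next
    case False
    then show ?thesis using assms by (simp add: coeff_revd coeff_monom_mult coeff_reflect_poly)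
  qed
qed

lemma revd_0[simp]: "revd d 0 = 0"
  unfolding revd_def by simp

lemma revd_mult:
  fixes p q :: "'a::idom poly"
  assumes "degree p \<le> a" "degree q \<le> b"
  shows "revd (a + b) (p * q) = revd a p * revd b q"
proof (cases "p = 0 \<or> q = 0")
  case True then show ?thesis by auto
next
  case False
  hence d: "degree (p * q) = degree p + degree q" by (simp add: degree_mult_eq)
  have "revd (a + b) (p * q) = monom 1 (a + b - degree (p*q)) * reflect_poly (p * q)"
    by (rule revd_reflect) (use d assms in simp)
  also have "\<dots> = (monom 1 (a - degree p) * reflect_poly p) * (monom 1 (b - degree q) * reflect_poly q)"
  proof -
    have "a + b - degree (p*q) = (a - degree p) + (b - degree q)" using d assms by simp
    hence "monom (1::'a) (a + b - degree (p*q)) = monom 1 (a - degree p) * monom 1 (b - degree q)"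
      by (simp add: mult_monom)
    thus ?thesis by (simp add: reflect_poly_mult ac_simps)
  qed
  also have "\<dots> = revd a p * revd b q" using assms by (simp add: revd_reflect)
  finally show ?thesis .
qed

lemma pal_mult:
  fixes p q :: "'a::idom poly"
  assumes a: "pal a p" and b: "pal b q" shows "pal (a + b) (p * q)"
  using revd_mult[OF pal_degree[OF a] pal_degree[OF b]] a b unfolding pal_def by simp

lemma pal_power:
  fixes p :: "'a::idom poly"
  shows "pal a p \<Longrightarrow> pal (a * k) (p ^ k)"
proof (induction k)
  case 0 show ?case by (simp add: pal_def poly_eq_iff coeff_revd)
next
  case (Suc k)
  then show ?case using pal_mult[OF Suc.prems Suc.IH] by (simp add: ac_simps)
qed

lemma revd_diff: "revd d (p - q) = revd d p - revd d q"
  by (rule poly_eqI) (simp add: coeff_revd)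

lemma revd_sum: "revd d (sum f S) = (\<Sum>x\<in>S. revd d (f x))"
  by (rule poly_eqI) (simp add: coeff_revd coeff_sum)

lemma pal_sum: "(\<And>x. x \<in> S \<Longrightarrow> pal d (f x)) \<Longrightarrow> pal d (sum f S)"
  unfolding pal_def by (simp add: revd_sum)

lemma pal_const: "pal 0 [:c:]"
  by (auto simp: pal_def poly_eq_iff coeff_revd coeff_pCons split: nat.split)

lemma pal_zero: "pal d 0"
  by (simp add: pal_def)

lemma pal_monom: "pal (2 * j) (monom 1 j)"
  by (auto simp: pal_def poly_eq_iff coeff_revd coeff_monom)

lemma revd_shift: assumes "degree p \<le> d" shows "revd (d + e) p = monom 1 e * revd d p"
proof (rule poly_eqI)
  fix i
  show "coeff (revd (d + e) p) i = coeff (monom 1 e * revd d p) i"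
  proof (cases "e \<le> i")
    case True
    then show ?thesis using assms by (auto simp: coeff_revd coeff_monom_mult)
  next
    case False
    then show ?thesis using assms by (auto simp: coeff_revd coeff_monom_mult coeff_eq_0)
  qed
qed

lemma pal_B1: "pal 1 [:1,1:]"
  by (simp add: pal_def revd_def sum.atMost_Suc monom_0 monom_Suc)

lemma pal_B2: "pal 2 [:1,0,1:]"
  by (simp add: pal_def revd_def sum.atMost_Suc monom_0 monom_Suc numeral_2_eq_2)



definition T :: "int poly \<Rightarrow> (nat \<Rightarrow> int poly) \<Rightarrow> nat \<Rightarrow> int poly \<Rightarrow> int poly" where
  "T B w N \<chi> = (\<Sum>k\<le>N. [:coeff \<chi> k:] * B ^ k * w (N - k))"

lemma T_diff: "T B w N (p - q) = T B w N p - T B w N q"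
  unfolding T_def by (simp add: smult_diff_left sum_subtractf[symmetric] left_diff_distrib)

lemma T_x: "T B w (Suc N) ([:0,1:] * p) = B * T B w N p"
  unfolding T_def by (subst sum.atMost_Suc_shift) (simp add: sum_distrib_left ac_simps del: sum.atMost_Suc)

lemma T_x': "T B w (Suc N) (pCons 0 p) = B * T B w N p"
  using T_x[of B w N p] by simp

lemma T_shift2:
  assumes w: "\<And>j. w (Suc (Suc j)) = W * w j" and d: "degree q \<le> K"
  shows "T B w (Suc (Suc K)) q = W * T B w K q"
proof -
  have "T B w (Suc (Suc K)) q = (\<Sum>k\<le>K. [:coeff q k:] * B ^ k * w (Suc (Suc K) - k))"
    unfolding T_def using d by (simp add: sum.atMost_Suc coeff_eq_0)
  also have "\<dots> = (\<Sum>k\<le>K. W * ([:coeff q k:] * B ^ k * w (K - k)))"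
    by (rule sum.cong) (auto simp: Suc_diff_le w)
  finally show ?thesis unfolding T_def by (simp add: sum_distrib_left)
qed

lemma T_pal:
  assumes B: "pal s B" and w: "\<And>j. pal (s * j) (w j)"
  shows "pal (s * N) (T B w N \<chi>)"
  unfolding T_def
proof (rule pal_sum)
  fix k assume "k \<in> {..N}"
  hence "s * N = 0 + s * k + s * (N - k)" by (simp add: algebra_simps)
  thus "pal (s * N) ([:coeff \<chi> k:] * B ^ k * w (N - k))"
    using pal_mult[OF pal_mult[OF pal_const pal_power[OF B]] w] by metis
qed

lemma T_at0:
  assumes "poly B 0 = 1" "poly (w 0) 0 = 1" "\<And>j. j > 0 \<Longrightarrow> poly (w j) 0 = 0"
  shows "poly (T B w N \<chi>) 0 = coeff \<chi> N"
proof -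
  have "poly (T B w N \<chi>) 0 = (\<Sum>k\<le>N. if k = N then coeff \<chi> k else 0)"
    unfolding T_def poly_sum
    by (rule sum.cong) (use assms in auto)
  thus ?thesis by simp
qed



lemma rec_sol:
  fixes R :: "nat \<Rightarrow> int poly"
  assumes r: "\<And>m. R (Suc (Suc m)) = (W + 1) * R (Suc m) - W * R m"
  shows "(W - 1) * R m = W ^ m * (R 1 - R 0) - (R 1 - W * R 0)"
proof -
  have "(W - 1) * R m = W ^ m * (R 1 - R 0) - (R 1 - W * R 0) \<and>
        (W - 1) * R (Suc m) = W ^ Suc m * (R 1 - R 0) - (R 1 - W * R 0)"
  proof (induction m)
    case 0 then show ?case by (simp add: algebra_simps)
  next
    case (Suc m)
    have "(W - 1) * R (Suc (Suc m)) = (W + 1) * ((W - 1) * R (Suc m)) - W * ((W - 1) * R m)"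
      by (simp add: r algebra_simps)
    also have "\<dots> = (W + 1) * (W ^ Suc m * (R 1 - R 0) - (R 1 - W * R 0)) - W * (W ^ m * (R 1 - R 0) - (R 1 - W * R 0))"
      using Suc.IH by simp
    also have "\<dots> = W ^ Suc (Suc m) * (R 1 - R 0) - (R 1 - W * R 0)"
      by (simp add: algebra_simps)
    finally show ?case using Suc.IH by simp
  qed
  thus ?thesis by simp
qed

lemma main_generic:
  fixes \<chi> :: "nat \<Rightarrow> int poly" and W B :: "int poly"
  assumes Bp: "pal s B" and wp: "\<And>j. pal (s * j) (w j)"
    and B0: "poly B 0 = 1" and w0: "poly (w 0) 0 = 1" and wj: "\<And>j. j > 0 \<Longrightarrow> poly (w j) 0 = 0"
    and wW: "\<And>j. w (Suc (Suc j)) = W * w j" and BW: "B = W + 1" and W: "W = monom 1 s" and s: "s > 0"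
    and deg: "\<And>m. degree (\<chi> m) = n + m" and lc: "\<And>m. coeff (\<chi> m) (n + m) = 1"
    and rec: "\<And>m. \<chi> (Suc (Suc m)) = [:0,1:] * \<chi> (Suc m) - \<chi> m"
  shows "\<exists>P. lead_coeff P = 1 \<and> (\<forall>m. (W - 1) * T B w (n + m) (\<chi> m) = monom 1 (s * m) * P - reflect_poly P)"
proof -
  define R where "R m = T B w (n + m) (\<chi> m)" for m
  have Rrec: "R (Suc (Suc m)) = (W + 1) * R (Suc m) - W * R m" for m
  proof -
    have "R (Suc (Suc m)) = T B w (Suc (Suc (n + m))) ([:0,1:] * \<chi> (Suc m) - \<chi> m)"
      unfolding R_def rec by simp
    also have "\<dots> = B * T B w (Suc (n + m)) (\<chi> (Suc m)) - W * T B w (n + m) (\<chi> m)"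
      by (simp add: T_diff T_x' T_shift2[of w W, OF wW] deg)
    finally show ?thesis unfolding R_def BW by simp
  qed
  define P where "P = R 1 - R 0"
  define d where "d = s * n + s"
  have p0: "pal (s * n) (R 0)" unfolding R_def using T_pal[of s B w, OF Bp wp] by simp
  have p1: "pal d (R 1)" unfolding R_def d_def using T_pal[of s B w, OF Bp wp, of "Suc n"] by (simp add: algebra_simps)
  have R1at0: "poly (R 1) 0 = 1" unfolding R_def using T_at0[of B w, OF B0 w0 wj] lc[of 1] by simp
  have c1: "coeff (R 1) d = 1"
  proof -
    have "coeff (R 1) d = coeff (revd d (R 1)) d" using p1 unfolding pal_def by simp
    also have "\<dots> = coeff (R 1) 0" by (simp add: coeff_revd)
    also have "\<dots> = 1" using R1at0 by (simp add: poly_0_coeff_0)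
    finally show ?thesis .
  qed
  have dR0: "degree (R 0) < d" using pal_degree[OF p0] s unfolding d_def by simp
  have cP: "coeff P d = 1" unfolding P_def using c1 dR0 by (simp add: coeff_eq_0)
  have dP: "degree P \<le> d" unfolding P_def using pal_degree[OF p1] dR0
    by (meson degree_diff_le less_imp_le)
  have degP: "degree P = d" using dP cP by (metis le_antisym le_degree zero_neq_one)
  have lcP: "lead_coeff P = 1" using degP cP by simp
  have refl: "reflect_poly P = R 1 - W * R 0"
  proof -
    have "reflect_poly P = revd d P"
      by (rule poly_eqI) (simp add: coeff_reflect_poly coeff_revd degP)
    also have "\<dots> = revd d (R 1) - revd (s * n + s) (R 0)" unfolding P_def revd_diff d_def by simp
    also have "revd (s * n + s) (R 0) = monom 1 s * revd (s * n) (R 0)"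
      by (rule revd_shift[OF pal_degree[OF p0]])
    finally show ?thesis using p0 p1 W unfolding pal_def by simp
  qed
  have "(W - 1) * T B w (n + m) (\<chi> m) = monom 1 (s * m) * P - reflect_poly P" for m
  proof -
    have "(W - 1) * R m = W ^ m * P - reflect_poly P"
      unfolding refl unfolding P_def by (rule rec_sol[of R W, OF Rrec])
    moreover have "W ^ m = monom 1 (s * m)" unfolding W by (simp add: monom_power mult.commute)
    ultimately show ?thesis unfolding R_def by simp
  qed
  thus ?thesis using lcP by blast
qed



lemma bip_ext:
  assumes "v < n"
  shows "bipartite (n + m) (path_ext n E v m) \<longleftrightarrow> bipartite n E"
proof
  assume "bipartite (n + m) (path_ext n E v m)"
  then obtain c :: "nat \<Rightarrow> bool" where c: "\<forall>i<n+m. \<forall>j<n+m. path_ext n E v m i j \<longrightarrow> c i \<noteq> c j"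
    unfolding bipartite_def by blast
  show "bipartite n E" unfolding bipartite_def
    by (rule exI[of _ c]) (use c in \<open>auto simp: path_ext_def\<close>)
next
  assume "bipartite n E"
  then obtain c :: "nat \<Rightarrow> bool" where c: "\<forall>i<n. \<forall>j<n. E i j \<longrightarrow> c i \<noteq> c j"
    unfolding bipartite_def by blast
  define c' where "c' i = (if i < n then c i else if even (i - n) then \<not> c v else c v)" for i
  have "\<forall>i<n+m. \<forall>j<n+m. path_ext n E v m i j \<longrightarrow> c' i \<noteq> c' j"
  proof (intro allI impI)
    fix i j assume ij: "i < n + m" "j < n + m" and e: "path_ext n E v m i j"
    from e consider "i < n \<and> j < n \<and> E i j" | "i = v \<and> j = n" | "i = n \<and> j = v"
      | "n \<le> i \<and> j = i + 1" | "n \<le> j \<and> i = j + 1"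
      unfolding path_ext_def by blast
    then show "c' i \<noteq> c' j"
    proof cases
      case 1 then show ?thesis using c unfolding c'_def by auto
    next
      case 2 then show ?thesis using assms unfolding c'_def by auto
    next
      case 3 then show ?thesis using assms unfolding c'_def by auto
    next
      case 4
      hence "j - n = Suc (i - n)" "\<not> i < n" "\<not> j < n" by auto
      then show ?thesis unfolding c'_def by simp
    next
      case 5
      hence "i - n = Suc (j - n)" "\<not> i < n" "\<not> j < n" by auto
      then show ?thesis unfolding c'_def by simp
    qed
  qed
  thus "bipartite (n + m) (path_ext n E v m)" unfolding bipartite_def by blast
qed

definition wb :: "nat \<Rightarrow> int poly" where
  "wb j = (if even j then monom 1 (j div 2) else 0)"

lemma recip_T:
  "recip_poly N E' = (if bipartite N E' then T [:1,1:] wb N (char_poly_graph N E')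
                      else T [:1,0,1:] (\<lambda>j. monom 1 j) N (char_poly_graph N E'))"
  unfolding recip_poly_def Let_def T_def wb_def by (auto intro!: sum.cong)



theorem lemma10:
  fixes n :: nat and E :: "nat \<Rightarrow> nat \<Rightarrow> bool" and v :: nat
  assumes "simple_graph n E" and "v < n"
  shows "\<exists>P :: int poly. lead_coeff P = 1 \<and>
           (\<forall>m\<ge>2. (if bipartite n E then [:-1, 1:] else [:-1, 0, 1:])
                      * recip_poly (n + m) (path_ext n E v m)
                    = (if bipartite n E then monom 1 m else monom 1 (2 * m)) * P - reflect_poly P)"
proof -
  define \<chi> where "\<chi> m = char_poly_graph (n + m) (path_ext n E v m)" for m
  have deg: "degree (\<chi> m) = n + m" and lc: "coeff (\<chi> m) (n + m) = 1" for m
    using degree_monic_char_poly[of "adj_mat (n + m) (path_ext n E v m)" "n + m"]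
    unfolding \<chi>_def char_poly_graph_def adj_mat_def by auto
  have rec: "\<chi> (Suc (Suc m)) = [:0,1:] * \<chi> (Suc m) - \<chi> m" for m
    unfolding \<chi>_def using char_poly_rec[OF assms(2)] by simp
  have R: "recip_poly (n + m) (path_ext n E v m) =
     (if bipartite n E then T [:1,1:] wb (n + m) (\<chi> m) else T [:1,0,1:] (\<lambda>j. monom 1 j) (n + m) (\<chi> m))" for m
    unfolding recip_T bip_ext[OF assms(2)] \<chi>_def ..
  show ?thesis
  proof (cases "bipartite n E")
    case True
    have m11: "monom (1::int) 1 = [:0,1:]" by (simp add: monom_Suc monom_0)
    have "\<exists>P. lead_coeff P = 1 \<and> (\<forall>m. (monom 1 1 - 1) * T [:1,1:] wb (n + m) (\<chi> m) = monom 1 (1 * m) * P - reflect_poly P)"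
    proof (rule main_generic[OF pal_B1 _ _ _ _ _ _ refl _ deg lc rec])
      fix j :: nat show "pal (1 * j) (wb j)"
        unfolding wb_def using pal_monom[of "j div 2"] by (auto simp: pal_zero)
    next
      show "poly [:1, 1:] 0 = (1::int)" by simp
    next
      show "poly (wb 0) 0 = 1" by (simp add: wb_def)
    next
      fix j :: nat assume "0 < j" thus "poly (wb j) 0 = 0" by (auto simp: wb_def poly_monom)
    next
      fix j show "wb (Suc (Suc j)) = monom 1 1 * wb j" by (simp add: wb_def mult_monom)
    next
      show "[:1, 1:] = monom 1 1 + (1 :: int poly)" unfolding m11 by (simp add: one_pCons)
    qed simp
    moreover have "monom 1 1 - 1 = [:-1, 1::int:]" unfolding m11 by (simp add: one_pCons)
    ultimately show ?thesis using True R by auto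
  next
    case False
    have m2: "monom (1::int) 2 = [:0,0,1:]" by (simp add: monom_Suc monom_0 numeral_2_eq_2)
    have "\<exists>P. lead_coeff P = 1 \<and> (\<forall>m. (monom 1 2 - 1) * T [:1,0,1:] (\<lambda>j. monom 1 j) (n + m) (\<chi> m) = monom 1 (2 * m) * P - reflect_poly P)"
    proof (rule main_generic[OF pal_B2 _ _ _ _ _ _ refl _ deg lc rec])
      fix j :: nat show "pal (2 * j) (monom 1 j :: int poly)" by (rule pal_monom)
    next
      show "poly [:1, 0, 1:] 0 = (1::int)" by simp
    next
      show "poly (monom 1 0) 0 = (1::int)" by (simp add: poly_monom)
    next
      fix j :: nat assume "0 < j" thus "poly (monom 1 j) 0 = (0::int)" by (simp add: poly_monom)
    next
      fix j show "monom 1 (Suc (Suc j)) = monom 1 2 * (monom 1 j :: int poly)" by (simp add: mult_monom)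
    next
      show "[:1, 0, 1:] = monom 1 2 + (1 :: int poly)" unfolding m2 by (simp add: one_pCons)
    qed simp
    moreover have "monom 1 2 - 1 = [:-1, 0, 1::int:]" unfolding m2 by (simp add: one_pCons)
    ultimately show ?thesis using False R by auto
  qed
qed

end
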